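(* Let $X$ be a transient random walk on $\mathbf{Z}^d$ and let $U(A):=\sum_{x\in A\cap\mathbf{Z}^d}g(0,x)$ for $A\subseteq\mathbf{R}^d$. Then $U(\mathcal{V}_{n+1})\le 4^dU(\mathcal{V}_n)$ for all integers $n\ge0$.
   Context: A random walk on $\mathbf{Z}^d$ is $X_n=X_0+\xi_1+\cdots+\xi_n$ with $\xi_1,\xi_2,\dots$ i.i.d. $\mathbf{Z}^d$-valued; $P^a$ denotes its law when $X_0=a$. Its Green function is $g(a,x):=\sum_{n\ge0}P^a\{X_n=x\}$, and transience means $g$ is finite. For $k\ge0$, $\mathcal{V}_k:=[-2^k,2^k)^d$. *)

theory Defs
  imports "HOL-Analysis.Analysis" "HOL-Probability.Probability"
begin

text \<open>Z^d is modelled as int ^ 'd for a finite index type 'd (d = CARD('d)).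
  The step distribution (law of xi_1) is a pmf mu on int ^ 'd.
  rw_law mu a n is the law of X_n = a + xi_1 + ... + xi_n under P^a.\<close>

fun rw_law :: "(int ^ 'd) pmf \<Rightarrow> int ^ 'd \<Rightarrow> nat \<Rightarrow> (int ^ 'd) pmf" where
  "rw_law \<mu> a 0 = return_pmf a"
| "rw_law \<mu> a (Suc n) = bind_pmf (rw_law \<mu> a n) (\<lambda>y. map_pmf (\<lambda>s. y + s) \<mu>)"

definition green :: "(int ^ 'd) pmf \<Rightarrow> int ^ 'd \<Rightarrow> int ^ 'd \<Rightarrow> ennreal" where
  "green \<mu> a x = (\<Sum>n. ennreal (pmf (rw_law \<mu> a n) x))"

definition transient :: "(int ^ 'd) pmf \<Rightarrow> bool" where
  "transient \<mu> \<longleftrightarrow> (\<forall>a x. green \<mu> a x < \<infinity>)"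

definition box_V :: "nat \<Rightarrow> (int ^ 'd) set" where
  "box_V k = {x. \<forall>i. - (2 ^ k) \<le> x $ i \<and> x $ i < 2 ^ k}"

definition U_pot :: "(int ^ 'd) pmf \<Rightarrow> (int ^ 'd) set \<Rightarrow> ennreal" where
  "U_pot \<mu> A = (\<Sum>x\<in>A. green \<mu> 0 x)"

end

theory Submission
  imports Defs
begin


abbreviation CS where "CS \<equiv> count_space (UNIV :: (int^'d) set)"

definition pp :: "(int^'d) pmf \<Rightarrow> nat \<Rightarrow> int^'d \<Rightarrow> ennreal" where
  "pp \<mu> n x = ennreal (pmf (rw_law \<mu> 0 n) x)"

fun qq :: "(int^'d) pmf \<Rightarrow> (int^'d) set \<Rightarrow> nat \<Rightarrow> int^'d \<Rightarrow> ennreal" where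
  "qq \<mu> Q 0 x = (if x = 0 then 1 else 0)"
| "qq \<mu> Q (Suc k) x = (\<integral>\<^sup>+ y. qq \<mu> Q k y * indicator (-Q) y * ennreal (pmf \<mu> (x - y)) \<partial>CS)"

lemma nn_trans:
  fixes c :: "int^'d"
  shows "(\<integral>\<^sup>+ y. f (y + c) \<partial>CS) = (\<integral>\<^sup>+ y. f y \<partial>CS)"
proof -
  have "bij_betw (\<lambda>y. y + c) UNIV (UNIV :: (int^'d) set)"
    by (rule bij_betwI[where g="\<lambda>y. y - c"]) auto
  then show ?thesis by (rule nn_integral_bij_count_space)
qed

lemma pmf_shift: "pmf (map_pmf (\<lambda>s. y + s) \<mu>) x = pmf \<mu> (x - (y::int^'d))"
proof -
  have "pmf (map_pmf (\<lambda>s. y + s) \<mu>) (y + (x - y)) = pmf \<mu> (x - y)"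
    by (rule pmf_map_inj') (auto simp: inj_def)
  then show ?thesis by simp
qed

lemma pp_0: "pp \<mu> 0 x = (if x = 0 then 1 else 0)"
  by (simp add: pp_def indicator_def)

lemma pp_Suc: "pp \<mu> (Suc n) x = (\<integral>\<^sup>+ y. pp \<mu> n y * ennreal (pmf \<mu> (x - y)) \<partial>CS)"
  unfolding pp_def rw_law.simps ennreal_pmf_bind pmf_shift nn_integral_measure_pmf ..

lemma pmf_int1: "(\<integral>\<^sup>+ x. ennreal (pmf \<mu> (x - (y::int^'d))) \<partial>CS) = 1"
proof -
  have "(\<integral>\<^sup>+ x. ennreal (pmf \<mu> (x - y)) \<partial>CS) = (\<integral>\<^sup>+ x. ennreal (pmf \<mu> ((x + y) - y)) \<partial>CS)"
    by (rule nn_trans[symmetric])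
  also have "\<dots> = 1" by (simp add: nn_integral_pmf_eq_1)
  finally show ?thesis .
qed

lemma pp_shift: "(\<integral>\<^sup>+ y. pp \<mu> m (y - b) * ennreal (pmf \<mu> (x - y)) \<partial>CS) = pp \<mu> (Suc m) (x - b)"
proof -
  have "(\<integral>\<^sup>+ y. pp \<mu> m (y - b) * ennreal (pmf \<mu> (x - y)) \<partial>CS)
      = (\<integral>\<^sup>+ y. pp \<mu> m ((y + b) - b) * ennreal (pmf \<mu> (x - (y + b))) \<partial>CS)"
    by (rule nn_trans[symmetric])
  also have "\<dots> = (\<integral>\<^sup>+ y. pp \<mu> m y * ennreal (pmf \<mu> (x - b - y)) \<partial>CS)"
    by (simp add: algebra_simps)
  also have "\<dots> = pp \<mu> (Suc m) (x - b)" by (simp add: pp_Suc)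
  finally show ?thesis .
qed

lemma int_point: "(\<integral>\<^sup>+ b. (if b = (a::int^'d) then 1 else 0) * f b \<partial>CS) = f a"
proof -
  have "(\<integral>\<^sup>+ b. (if b = a then 1 else 0) * f b \<partial>CS) = (\<integral>\<^sup>+ b. f a * indicator {a} b \<partial>CS)"
    by (rule nn_integral_cong) (auto simp: indicator_def)
  also have "\<dots> = f a" by (simp add: nn_integral_cmult_indicator)
  finally show ?thesis .
qed

lemma swapCS: "(\<integral>\<^sup>+ y. \<integral>\<^sup>+ b. f b y \<partial>CS \<partial>CS) = (\<integral>\<^sup>+ b. \<integral>\<^sup>+ y. f b y \<partial>CS \<partial>CS)"
  by (rule nn_integral_count_space_nn_integral) auto

lemma decomp:
  "pp \<mu> n x = qq \<mu> Q n x * indicator (-Q) x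
     + (\<Sum>k\<le>n. \<integral>\<^sup>+ b. qq \<mu> Q k b * indicator Q b * pp \<mu> (n-k) (x-b) \<partial>CS)"
proof (induction n arbitrary: x)
  case 0
  have "(\<integral>\<^sup>+ b. qq \<mu> Q 0 b * indicator Q b * pp \<mu> 0 (x-b) \<partial>CS)
     = (\<integral>\<^sup>+ b. (if b = 0 then 1 else 0) * (indicator Q b * pp \<mu> 0 (x-b)) \<partial>CS)"
    by (simp add: mult.assoc)
  also have "\<dots> = indicator Q 0 * pp \<mu> 0 x" by (subst int_point) simp
  finally show ?case by (auto simp: pp_0 indicator_def)
next
  case (Suc n)
  define F where "F k y = (\<integral>\<^sup>+ b. qq \<mu> Q k b * indicator Q b * pp \<mu> (n-k) (y-b) \<partial>CS)" for k y
  have "pp \<mu> (Suc n) x = (\<integral>\<^sup>+ y. (qq \<mu> Q n y * indicator (-Q) y + (\<Sum>k\<le>n. F k y)) * ennreal (pmf \<mu> (x - y)) \<partial>CS)"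
    unfolding pp_Suc F_def using Suc.IH by simp
  also have "\<dots> = (\<integral>\<^sup>+ y. qq \<mu> Q n y * indicator (-Q) y * ennreal (pmf \<mu> (x - y)) + (\<Sum>k\<le>n. F k y * ennreal (pmf \<mu> (x - y))) \<partial>CS)"
    by (simp add: distrib_right sum_distrib_right)
  also have "\<dots> = qq \<mu> Q (Suc n) x + (\<Sum>k\<le>n. \<integral>\<^sup>+ y. F k y * ennreal (pmf \<mu> (x - y)) \<partial>CS)"
    by (simp add: nn_integral_add nn_integral_sum)
  also have "(\<Sum>k\<le>n. \<integral>\<^sup>+ y. F k y * ennreal (pmf \<mu> (x - y)) \<partial>CS)
      = (\<Sum>k\<le>n. \<integral>\<^sup>+ b. qq \<mu> Q k b * indicator Q b * pp \<mu> (Suc n - k) (x-b) \<partial>CS)"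
  proof (rule sum.cong[OF refl])
    fix k assume k: "k \<in> {..n}"
    have "(\<integral>\<^sup>+ y. F k y * ennreal (pmf \<mu> (x - y)) \<partial>CS)
        = (\<integral>\<^sup>+ y. \<integral>\<^sup>+ b. qq \<mu> Q k b * indicator Q b * (pp \<mu> (n-k) (y-b) * ennreal (pmf \<mu> (x - y))) \<partial>CS \<partial>CS)"
      unfolding F_def by (simp add: nn_integral_multc[symmetric] mult.assoc)
    also have "\<dots> = (\<integral>\<^sup>+ b. \<integral>\<^sup>+ y. qq \<mu> Q k b * indicator Q b * (pp \<mu> (n-k) (y-b) * ennreal (pmf \<mu> (x - y))) \<partial>CS \<partial>CS)"
      by (rule swapCS)
    also have "\<dots> = (\<integral>\<^sup>+ b. qq \<mu> Q k b * indicator Q b * pp \<mu> (Suc (n-k)) (x-b) \<partial>CS)"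
      by (simp add: nn_integral_cmult pp_shift)
    also have "Suc (n-k) = Suc n - k" using k by auto
    finally show "(\<integral>\<^sup>+ y. F k y * ennreal (pmf \<mu> (x - y)) \<partial>CS)
      = (\<integral>\<^sup>+ b. qq \<mu> Q k b * indicator Q b * pp \<mu> (Suc n - k) (x-b) \<partial>CS)" .
  qed
  also have "qq \<mu> Q (Suc n) x = qq \<mu> Q (Suc n) x * indicator (-Q) x
      + (\<integral>\<^sup>+ b. qq \<mu> Q (Suc n) b * indicator Q b * pp \<mu> (Suc n - Suc n) (x-b) \<partial>CS)"
  proof -
    have "(\<integral>\<^sup>+ b. qq \<mu> Q (Suc n) b * indicator Q b * pp \<mu> (Suc n - Suc n) (x-b) \<partial>CS)
        = (\<integral>\<^sup>+ b. (if b = x then 1 else 0) * (qq \<mu> Q (Suc n) b * indicator Q b) \<partial>CS)"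
      by (rule nn_integral_cong) (auto simp: pp_0)
    also have "\<dots> = qq \<mu> Q (Suc n) x * indicator Q x" by (rule int_point)
    finally show ?thesis by (auto simp: indicator_def)
  qed
  finally show ?case by (simp add: add.assoc add.commute add.left_commute)
qed


lemma mass_step:
  fixes \<mu> :: "(int^'d) pmf"
  shows "(\<integral>\<^sup>+ x. qq \<mu> Q k x \<partial>CS) = (\<integral>\<^sup>+ x. qq \<mu> Q k x * indicator Q x \<partial>CS) + (\<integral>\<^sup>+ x. qq \<mu> Q (Suc k) x \<partial>CS)"
proof -
  have "(\<integral>\<^sup>+ x. qq \<mu> Q (Suc k) x \<partial>CS)
      = (\<integral>\<^sup>+ x. \<integral>\<^sup>+ y. qq \<mu> Q k y * indicator (-Q) y * ennreal (pmf \<mu> (x - y)) \<partial>CS \<partial>CS)" by simp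
  also have "\<dots> = (\<integral>\<^sup>+ y. \<integral>\<^sup>+ x. qq \<mu> Q k y * indicator (-Q) y * ennreal (pmf \<mu> (x - y)) \<partial>CS \<partial>CS)"
    by (rule swapCS)
  also have "\<dots> = (\<integral>\<^sup>+ y. qq \<mu> Q k y * indicator (-Q) y \<partial>CS)"
    by (simp add: nn_integral_cmult pmf_int1)
  finally have 1: "(\<integral>\<^sup>+ x. qq \<mu> Q (Suc k) x \<partial>CS) = (\<integral>\<^sup>+ y. qq \<mu> Q k y * indicator (-Q) y \<partial>CS)" .
  have "(\<integral>\<^sup>+ x. qq \<mu> Q k x \<partial>CS) = (\<integral>\<^sup>+ x. qq \<mu> Q k x * indicator Q x + qq \<mu> Q k x * indicator (-Q) x \<partial>CS)"
    by (rule nn_integral_cong) (auto simp: indicator_def)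
  also have "\<dots> = (\<integral>\<^sup>+ x. qq \<mu> Q k x * indicator Q x \<partial>CS) + (\<integral>\<^sup>+ y. qq \<mu> Q k y * indicator (-Q) y \<partial>CS)"
    by (simp add: nn_integral_add)
  finally show ?thesis using 1 by simp
qed

lemma mass_sum:
  fixes \<mu> :: "(int^'d) pmf"
  shows "(\<Sum>k<N. \<integral>\<^sup>+ x. qq \<mu> Q k x * indicator Q x \<partial>CS) + (\<integral>\<^sup>+ x. qq \<mu> Q N x \<partial>CS) = 1"
proof (induction N)
  case 0
  have "(\<integral>\<^sup>+ x. qq \<mu> Q 0 x \<partial>CS) = (\<integral>\<^sup>+ x. (if (x::int^'d) = 0 then 1 else 0) * 1 \<partial>CS)"
    by (rule nn_integral_cong) simp
  also have "\<dots> = 1" by (rule int_point)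
  finally show ?case by simp
next
  case (Suc N)
  then show ?case using mass_step[of \<mu> Q N] by (simp add: add.assoc)
qed

lemma mass_le:
  fixes \<mu> :: "(int^'d) pmf"
  shows "(\<Sum>k<N. \<integral>\<^sup>+ x. qq \<mu> Q k x * indicator Q x \<partial>CS) \<le> 1"
  using add_increasing2[OF zero_le order_refl, of "\<Sum>k<N. \<integral>\<^sup>+ x. qq \<mu> Q k x * indicator Q x \<partial>CS" "\<integral>\<^sup>+ x. qq \<mu> Q N x \<partial>CS"]
  unfolding mass_sum .

lemma key:
  fixes \<mu> :: "(int^'d) pmf"
  assumes fin: "finite Q" and hb: "\<And>b. b \<in> Q \<Longrightarrow> (\<Sum>x\<in>Q. green \<mu> 0 (x - b)) \<le> V"
  shows "(\<Sum>x\<in>Q. green \<mu> 0 x) \<le> V"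
proof -
  define f where "f x k m = (\<integral>\<^sup>+ b. qq \<mu> Q k b * indicator Q b * pp \<mu> m (x-b) \<partial>CS)" for x k m
  define a where "a k = (\<integral>\<^sup>+ b. qq \<mu> Q k b * indicator Q b \<partial>CS)" for k
  have gr: "green \<mu> 0 y = (\<Sum>n. pp \<mu> n y)" for y by (simp add: green_def pp_def)
  have part: "(\<Sum>x\<in>Q. \<Sum>n<N. pp \<mu> n x) \<le> V" for N
  proof -
    have "(\<Sum>n<N. pp \<mu> n x) \<le> (\<Sum>k<N. \<Sum>m<N. f x k m)" if x: "x \<in> Q" for x
    proof -
      have "(\<Sum>n<N. pp \<mu> n x) = (\<Sum>n<N. \<Sum>k\<le>n. f x k (n - k))"
      proof (rule sum.cong[OF refl])
        fix n
        show "pp \<mu> n x = (\<Sum>k\<le>n. f x k (n - k))"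
          using decomp[of \<mu> n x Q] x unfolding f_def by simp
      qed
      also have "\<dots> = (\<Sum>(k,m)\<in>{(k,m). k + m < N}. f x k m)"
        by (rule sum.triangle_reindex[symmetric])
      also have "\<dots> \<le> (\<Sum>(k,m)\<in>{..<N} \<times> {..<N}. f x k m)"
        by (rule sum_mono2) auto
      also have "\<dots> = (\<Sum>k<N. \<Sum>m<N. f x k m)"
        by (rule sum.cartesian_product[symmetric])
      finally show ?thesis .
    qed
    then have "(\<Sum>x\<in>Q. \<Sum>n<N. pp \<mu> n x) \<le> (\<Sum>x\<in>Q. \<Sum>k<N. \<Sum>m<N. f x k m)"
      by (rule sum_mono)
    also have "\<dots> = (\<Sum>k<N. \<Sum>x\<in>Q. \<Sum>m<N. f x k m)" by (rule sum.swap)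
    also have "\<dots> = (\<Sum>k<N. \<integral>\<^sup>+ b. (\<Sum>x\<in>Q. \<Sum>m<N. qq \<mu> Q k b * indicator Q b * pp \<mu> m (x-b)) \<partial>CS)"
      unfolding f_def by (simp add: nn_integral_sum)
    also have "\<dots> = (\<Sum>k<N. \<integral>\<^sup>+ b. qq \<mu> Q k b * indicator Q b * (\<Sum>x\<in>Q. \<Sum>m<N. pp \<mu> m (x-b)) \<partial>CS)"
      by (simp add: sum_distrib_left)
    also have "\<dots> \<le> (\<Sum>k<N. \<integral>\<^sup>+ b. qq \<mu> Q k b * indicator Q b * V \<partial>CS)"
    proof (intro sum_mono nn_integral_mono)
      fix k b
      show "qq \<mu> Q k b * indicator Q b * (\<Sum>x\<in>Q. \<Sum>m<N. pp \<mu> m (x-b)) \<le> qq \<mu> Q k b * indicator Q b * V"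
      proof (cases "b \<in> Q")
        case True
        have "(\<Sum>x\<in>Q. \<Sum>m<N. pp \<mu> m (x-b)) \<le> (\<Sum>x\<in>Q. green \<mu> 0 (x - b))"
          unfolding gr by (intro sum_mono sum_le_suminf) auto
        also have "\<dots> \<le> V" using hb True by blast
        finally show ?thesis by (intro mult_left_mono) auto
      qed simp
    qed
    also have "\<dots> = (\<Sum>k<N. a k * V)"
      by (rule sum.cong[OF refl], unfold a_def, rule nn_integral_multc, simp)
    also have "\<dots> = (\<Sum>k<N. a k) * V"
      by (rule sum_distrib_right[symmetric])
    also have "\<dots> = V * (\<Sum>k<N. a k)"
      by (rule mult.commute)
    also have "\<dots> \<le> V * 1"
      unfolding a_def by (intro mult_left_mono mass_le) auto
    finally show ?thesis by simp
  qed
  have "(\<Sum>x\<in>Q. green \<mu> 0 x) = (\<Sum>n. \<Sum>x\<in>Q. pp \<mu> n x)"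
    unfolding gr by (rule suminf_sum[symmetric]) auto
  also have "\<dots> \<le> V"
  proof (rule suminf_le_const)
    show "summable (\<lambda>n. \<Sum>x\<in>Q. pp \<mu> n x)" by auto
    fix N show "(\<Sum>n<N. \<Sum>x\<in>Q. pp \<mu> n x) \<le> V"
      using part[of N] by (subst sum.swap) simp
  qed
  finally show ?thesis .
qed



lemma box_sub: "box_V k \<subseteq> vec_lambda ` (PiE UNIV (\<lambda>i. {-(2^k)..<(2^k)::int}))"
proof
  fix x :: "int^'d" assume "x \<in> box_V k"
  then have "(\<lambda>i. x $ i) \<in> PiE UNIV (\<lambda>i. {-(2^k)..<(2^k)::int})"
    by (auto simp: box_V_def PiE_iff)
  moreover have "x = vec_lambda (\<lambda>i. x $ i)" by simp
  ultimately show "x \<in> vec_lambda ` (PiE UNIV (\<lambda>i. {-(2^k)..<(2^k)::int}))" by blast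
qed

lemma box_finite: "finite (box_V k :: (int^'d) set)"
  by (rule finite_subset[OF box_sub]) (auto intro!: finite_PiE)

lemma div_close:
  fixes u v s :: int
  assumes "s > 0" "u div s = v div s"
  shows "- s \<le> u - v \<and> u - v < s"
proof -
  define q where "q = v div s"
  have "u = s * q + u mod s" "v = s * q + v mod s" using assms(2) unfolding q_def
    by (metis mult_div_mod_eq)+
  moreover have "0 \<le> u mod s" "u mod s < s" "0 \<le> v mod s" "v mod s < s" using assms by simp_all
  ultimately show ?thesis by linarith
qed

lemma div_range: "(s::int) > 0 \<Longrightarrow> 0 \<le> t \<Longrightarrow> t < s*4 \<Longrightarrow> 0 \<le> t div s \<and> t div s < 4"
proof -
  assume a: "s > 0" "0 \<le> t" "t < s*4"
  have "0 \<le> t div s" using a by (simp add: pos_imp_zdiv_nonneg_iff)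
  moreover have "t div s < 4"
  proof (rule ccontr)
    assume "\<not> t div s < 4"
    then have "s * 4 \<le> s * (t div s)" using a by (intro mult_left_mono) auto
    moreover have "t = s * (t div s) + t mod s" by simp
    moreover have "0 \<le> t mod s" using a by simp
    ultimately show False using a by linarith
  qed
  ultimately show ?thesis by simp
qed

theorem proposition6p2:
  fixes \<mu> :: "(int ^ 'd) pmf" and n :: nat
  assumes "transient \<mu>"
  shows "U_pot \<mu> (box_V (Suc n)) \<le> 4 ^ CARD('d) * U_pot \<mu> (box_V n)"
proof -
  define s :: int where "s = 2 ^ n"
  have s0: "s > 0" by (simp add: s_def)
  define W :: "(int^'d) set" where "W = box_V (Suc n)"
  define V :: "(int^'d) set" where "V = box_V n"
  define J :: "int^'d \<Rightarrow> int^'d" where "J x = (\<chi> i. (x $ i + 2 * s) div s)" for x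
  have finW: "finite W" unfolding W_def by (rule box_finite)
  have finV: "finite V" unfolding V_def by (rule box_finite)
  have fiber: "(\<Sum>x\<in>{x\<in>W. J x = j}. green \<mu> 0 x) \<le> U_pot \<mu> V" for j
  proof -
   have "(\<Sum>x\<in>{x\<in>W. J x = j}. green \<mu> 0 (x - b)) \<le> U_pot \<mu> V" if b: "b \<in> {x\<in>W. J x = j}" for b
   proof -
    have "(\<Sum>x\<in>{x\<in>W. J x = j}. green \<mu> 0 (x - b)) = (\<Sum>y\<in>(\<lambda>x. x - b) ` {x\<in>W. J x = j}. green \<mu> 0 y)"
      by (subst sum.reindex) (auto simp: inj_on_def)
    also have "\<dots> \<le> (\<Sum>y\<in>V. green \<mu> 0 y)"
    proof (rule sum_mono2[OF finV])
      show "(\<lambda>x. x - b) ` {x \<in> W. J x = j} \<subseteq> V"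
      proof (rule image_subsetI)
        fix x assume "x \<in> {x \<in> W. J x = j}"
        then have x: "x \<in> W" "J x = j" by auto
        have "J x = J b" using x b by simp
        then have "(x $ i + 2 * s) div s = (b $ i + 2 * s) div s" for i
          unfolding J_def by (metis vec_lambda_beta)
        from div_close[OF s0 this] show "x - b \<in> V"
          by (auto simp: V_def box_V_def s_def)
      qed
    qed auto
    finally show ?thesis by (simp add: U_pot_def)
   qed
   then show ?thesis by (intro key) (use finW in auto)
  qed
  have cardJ: "card (J ` W) \<le> 4 ^ CARD('d)"
  proof -
    have "J ` W \<subseteq> vec_lambda ` (PiE UNIV (\<lambda>i. {0..<4::int}))"
    proof
      fix j assume "j \<in> J ` W"
      then obtain x where x: "x \<in> W" "j = J x" by blast
      have "(\<lambda>i. j $ i) \<in> PiE UNIV (\<lambda>i. {0..<4::int})"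
      proof -
        have "0 \<le> (x $ i + 2 * s) div s \<and> (x $ i + 2 * s) div s < 4" for i
        proof -
          have "- (2 * s) \<le> x $ i" "x $ i < 2 * s" using x(1) by (auto simp: W_def box_V_def s_def)
          then have "0 \<le> x $ i + 2 * s" "x $ i + 2 * s < s * 4" by auto
          then show ?thesis using div_range[OF s0] by blast
        qed
        then show ?thesis using x by (auto simp: PiE_iff J_def)
      qed
      moreover have "j = vec_lambda (\<lambda>i. j $ i)" by simp
      ultimately show "j \<in> vec_lambda ` (PiE UNIV (\<lambda>i. {0..<4::int}))" by blast
    qed
    then have "card (J ` W) \<le> card (vec_lambda ` (PiE UNIV (\<lambda>i. {0..<4::int})) :: (int^'d) set)"
      by (intro card_mono finite_imageI finite_PiE) auto
    also have "\<dots> \<le> card (PiE UNIV (\<lambda>i::'d. {0..<4::int}))" by (rule card_image_le) (auto intro!: finite_PiE)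
    also have "\<dots> = 4 ^ CARD('d)" by (simp add: card_PiE)
    finally show ?thesis .
  qed
  have "U_pot \<mu> W = (\<Sum>j\<in>J ` W. \<Sum>x\<in>{x\<in>W. J x = j}. green \<mu> 0 x)"
    unfolding U_pot_def by (rule sum.image_gen[OF finW])
  also have "\<dots> \<le> of_nat (card (J ` W)) * U_pot \<mu> V"
    by (rule sum_bounded_above) (rule fiber)
  also have "\<dots> \<le> of_nat (4 ^ CARD('d)) * U_pot \<mu> V"
    by (intro mult_right_mono) (use of_nat_mono[OF cardJ] in simp_all)
  finally show ?thesis by (simp add: W_def V_def)
qed

end
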